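(* Let $G=(V,E,W)$ be a connected graph and $i,j\in V$ fixed distinct nodes. Then the map $\sigma\mapsto r^\sigma_{ij}$, defined on the set of $d$-dimensional signatures on $G$, is continuous.
   Context: $G$ finite connected weighted graph, $V=\{1,\dots,n\}$, $w_{xy}>0$ iff $\{x,y\}\in E$, $\deg(x)=\sum_yw_{xy}$. A $d$-dimensional signature is a map from oriented edges to $\mathsf{O}(d)$ with $\sigma_{yx}=\sigma_{xy}^{\mathrm T}$; the set of signatures is identified with $\mathsf{O}(d)^{E}$ (one matrix per edge with a fixed orientation) with the product topology. Connection Laplacian $\mathcal{L}^\sigma$: $nd\times nd$ block matrix with blocks $\deg(x)I_d$ on the diagonal, $-w_{xy}\sigma_{xy}$ for $x\sim y$, $0$ otherwise; $\dagger$ = Moore–Penrose pseudoinverse. $\Omega^0_{ij}=\mathbb{E}[\prod_{\ell=1}^{T^0_j}\sigma_{X_{\ell-1}X_\ell}\mid X_0=i]$ for the simple random walk with transition probabilities $w_{xy}/\deg(x)$ and $T^0_j=\inf\{t\ge0:X_t=j\}$. $N_{ij}$: $nd\times d$ block column with $I_d$ at node $i$, $-(\Omega^0_{ij})^{\mathrm T}$ at node $j$, $0$ elsewhere; $\mathcal{W}_{i\to j}=(\mathcal{L}^\sigma)^\dagger N_{ij}$. Connection effective resistance: $r^\sigma_{ij}=\frac{1}{2d}\operatorname{Tr}\big(\mathcal{W}_{i\to j}^{\mathrm T}\mathcal{L}^\sigma\mathcal{W}_{i\to j}+\mathcal{W}_{j\to i}^{\mathrm T}\mathcal{L}^\sigma\mathcal{W}_{j\to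 i}\big)$. *)

theory Defs
  imports "HOL-Analysis.Analysis"
begin

text \<open>Weighted graphs: vertex set = the finite type 'n, weights w x y (w x y > 0 iff edge).\<close>

definition weighted_graph :: "('n::finite \<Rightarrow> 'n \<Rightarrow> real) \<Rightarrow> bool" where
  "weighted_graph w \<longleftrightarrow> (\<forall>x y. w x y \<ge> 0 \<and> w x y = w y x) \<and> (\<forall>x. w x x = 0)"

definition graph_connected :: "('n::finite \<Rightarrow> 'n \<Rightarrow> real) \<Rightarrow> bool" where
  "graph_connected w \<longleftrightarrow> (\<forall>x y. (x, y) \<in> {(a, b). w a b > 0}\<^sup>*)"

definition deg :: "('n::finite \<Rightarrow> 'n \<Rightarrow> real) \<Rightarrow> 'n \<Rightarrow> real" where
  "deg w x = (\<Sum>y\<in>UNIV. w x y)"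

text \<open>d-dimensional signatures (d = CARD('d)): one orthogonal matrix per oriented edge,
  with sigma y x = transpose (sigma x y); normalised to 0 off the edges, so that the
  subspace topology of the product topology is that of O(d)^E.\<close>

definition signatures :: "('n::finite \<Rightarrow> 'n \<Rightarrow> real) \<Rightarrow> ('n \<Rightarrow> 'n \<Rightarrow> real^'d::finite^'d) set" where
  "signatures w = {\<sigma>. \<forall>x y.
      (w x y > 0 \<longrightarrow> orthogonal_matrix (\<sigma> x y) \<and> \<sigma> y x = transpose (\<sigma> x y)) \<and>
      (\<not> w x y > 0 \<longrightarrow> \<sigma> x y = 0)}"

definition conn_laplacian ::
  "('n::finite \<Rightarrow> 'n \<Rightarrow> real) \<Rightarrow> ('n \<Rightarrow> 'n \<Rightarrow> real^'d::finite^'d) \<Rightarrow> real^('n \<times> 'd)^('n \<times> 'd)" where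
  "conn_laplacian w \<sigma> = (\<chi> r c. let (x, a) = r; (y, b) = c in
      if x = y then (if a = b then deg w x else 0)
      else if w x y > 0 then - w x y * (\<sigma> x y $ a $ b) else 0)"

definition pinv :: "real^'m::finite^'m \<Rightarrow> real^'m^'m" where
  "pinv A = (THE X. A ** X ** A = A \<and> X ** A ** X = X \<and>
                    transpose (A ** X) = A ** X \<and> transpose (X ** A) = X ** A)"

fun walk_prob :: "('n::finite \<Rightarrow> 'n \<Rightarrow> real) \<Rightarrow> 'n list \<Rightarrow> real" where
  "walk_prob w (x # y # p) = w x y / deg w x * walk_prob w (y # p)"
| "walk_prob w _ = 1"

fun walk_holonomy :: "('n \<Rightarrow> 'n \<Rightarrow> real^'d::finite^'d) \<Rightarrow> 'n list \<Rightarrow> real^'d^'d" where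
  "walk_holonomy \<sigma> (x # y # p) = \<sigma> x y ** walk_holonomy \<sigma> (y # p)"
| "walk_holonomy \<sigma> _ = mat 1"

definition first_hit_walks :: "'n \<Rightarrow> 'n \<Rightarrow> 'n list set" where
  "first_hit_walks i j = {p. p \<noteq> [] \<and> hd p = i \<and> last p = j \<and> j \<notin> set (butlast p)}"

text \<open>Omega^0_{ij} = E[ prod_{l=1}^{T_j} sigma_{X_{l-1} X_l} | X_0 = i ], written out as the
  sum over all possible stopped trajectories of probability times value.\<close>

definition Omega0 ::
  "('n::finite \<Rightarrow> 'n \<Rightarrow> real) \<Rightarrow> ('n \<Rightarrow> 'n \<Rightarrow> real^'d::finite^'d) \<Rightarrow> 'n \<Rightarrow> 'n \<Rightarrow> real^'d^'d" where
  "Omega0 w \<sigma> i j = (\<Sum>\<^sub>\<infinity>p\<in>first_hit_walks i j. walk_prob w p *\<^sub>R walk_holonomy \<sigma> p)"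

definition Nmat ::
  "('n::finite \<Rightarrow> 'n \<Rightarrow> real) \<Rightarrow> ('n \<Rightarrow> 'n \<Rightarrow> real^'d::finite^'d) \<Rightarrow> 'n \<Rightarrow> 'n \<Rightarrow> real^'d^('n \<times> 'd)" where
  "Nmat w \<sigma> i j = (\<chi> r b. let (x, a) = r in
      if x = i then (mat 1 :: real^'d^'d) $ a $ b
      else if x = j then - (transpose (Omega0 w \<sigma> i j) $ a $ b) else 0)"

definition Wmat ::
  "('n::finite \<Rightarrow> 'n \<Rightarrow> real) \<Rightarrow> ('n \<Rightarrow> 'n \<Rightarrow> real^'d::finite^'d) \<Rightarrow> 'n \<Rightarrow> 'n \<Rightarrow> real^'d^('n \<times> 'd)" where
  "Wmat w \<sigma> i j = pinv (conn_laplacian w \<sigma>) ** Nmat w \<sigma> i j"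

definition conn_eff_resistance ::
  "('n::finite \<Rightarrow> 'n \<Rightarrow> real) \<Rightarrow> ('n \<Rightarrow> 'n \<Rightarrow> real^'d::finite^'d) \<Rightarrow> 'n \<Rightarrow> 'n \<Rightarrow> real" where
  "conn_eff_resistance w \<sigma> i j =
     1 / (2 * real CARD('d)) *
     (trace (transpose (Wmat w \<sigma> i j) ** conn_laplacian w \<sigma> ** Wmat w \<sigma> i j) +
      trace (transpose (Wmat w \<sigma> j i) ** conn_laplacian w \<sigma> ** Wmat w \<sigma> j i))"

end

theory Submission
  imports Defs
begin


lemma mat_add_rdistrib: "((A::'a::semiring_1^'n^'m) + B) ** C = A ** C + B ** C"
  by (vector matrix_matrix_mult_def sum.distrib[symmetric] field_simps)
lemma mat_sub_rdistrib: "((A::'a::ring_1^'n^'m) - B) ** C = A ** C - B ** C"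
  by (vector matrix_matrix_mult_def sum_subtractf[symmetric] field_simps)
lemma mat_sub_ldistrib: "(A::'a::ring_1^'n^'m) ** (B - C) = A ** B - A ** C"
  by (vector matrix_matrix_mult_def sum_subtractf[symmetric] field_simps)
lemma matvec_add_rdistrib: "((A::'a::semiring_1^'n^'m) + B) *v x = A *v x + B *v x"
  by (vector matrix_vector_mult_def sum.distrib[symmetric] field_simps)


lemma mp_unique:
  fixes A X Y :: "real^'m::finite^'m"
  assumes X: "A ** X ** A = A" "X ** A ** X = X" "transpose (A ** X) = A ** X" "transpose (X ** A) = X ** A"
  and Y: "A ** Y ** A = A" "Y ** A ** Y = Y" "transpose (A ** Y) = A ** Y" "transpose (Y ** A) = Y ** A"
  shows "X = Y"
proof -
  have "X = X ** (A ** X)" using X(2) by (simp add: matrix_mul_assoc)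
  also have "\<dots> = X ** transpose (A ** X)" using X(3) by simp
  also have "\<dots> = X ** transpose X ** transpose A" by (simp add: matrix_transpose_mul matrix_mul_assoc)
  also have "transpose A = transpose (A ** Y ** A)" using Y(1) by simp
  also have "\<dots> = transpose A ** transpose (A ** Y)" by (simp add: matrix_transpose_mul matrix_mul_assoc)
  also have "X ** transpose X ** (transpose A ** transpose (A ** Y)) = X ** transpose (A ** X) ** (A ** Y)"
    using Y(3) by (simp add: matrix_transpose_mul matrix_mul_assoc)
  also have "\<dots> = X ** A ** Y" using X(3) X(2) by (simp add: matrix_mul_assoc)
  finally have 1: "X = X ** A ** Y" .
  have "Y = (Y ** A) ** Y" using Y(2) by (simp add: matrix_mul_assoc)
  also have "\<dots> = transpose (Y ** A) ** Y" using Y(4) by simp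
  also have "\<dots> = transpose A ** transpose Y ** Y" by (simp add: matrix_transpose_mul)
  also have "transpose A = transpose (A ** X ** A)" using X(1) by simp
  also have "\<dots> = transpose (X ** A) ** transpose A" by (simp add: matrix_transpose_mul matrix_mul_assoc)
  also have "transpose (X ** A) ** transpose A ** transpose Y ** Y = (X ** A) ** transpose (Y ** A) ** Y"
    using X(4) by (simp add: matrix_transpose_mul matrix_mul_assoc)
  also have "\<dots> = (X ** A) ** (Y ** A ** Y)" using Y(4) by (simp add: matrix_mul_assoc)
  also have "\<dots> = X ** A ** Y" using Y(2) by simp
  finally show ?thesis using 1 by simp
qed



lemma sym_inner:
  fixes A :: "real^'m::finite^'m"
  assumes "transpose A = A"
  shows "x \<bullet> (A *v y) = (A *v x) \<bullet> y"
  by (metis assms dot_lmul_matrix transpose_matrix_vector)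

lemma kernel_proj_exists:
  fixes A :: "real^'m::finite^'m"
  assumes sym: "transpose A = A"
  obtains Q :: "real^'m^'m" where "transpose Q = Q" "A ** Q = 0"
    "\<And>v. A *v v = 0 \<Longrightarrow> Q *v v = v"
proof -
  let ?K = "{v. A *v v = 0}"
  have sK: "subspace ?K"
    by (auto simp: subspace_def matrix_vector_right_distrib matrix_vector_mult_scaleR)
  obtain B where B: "B \<subseteq> ?K" "pairwise orthogonal B" "\<And>x. x \<in> B \<Longrightarrow> norm x = 1"
    "independent B" "span B = ?K"
    using orthonormal_basis_subspace[OF sK] by metis
  have fB: "finite B" using B(4) independent_imp_finite by blast
  define f where "f v = (\<Sum>b\<in>B. (b \<bullet> v) *\<^sub>R b)" for v :: "real^'m"
  have lf: "linear f" unfolding f_def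
    by (auto simp: linear_iff inner_add_right scaleR_add_left sum.distrib scaleR_sum_right)
  define Q where "Q = matrix f"
  have Qv: "Q *v v = f v" for v unfolding Q_def using lf by (simp add: matrix_works linear_matrix_vector_mul_eq)
  have fK: "f v \<in> ?K" for v
  proof -
    have "f v \<in> span B" unfolding f_def by (intro span_sum span_mul span_base) 
    then show ?thesis using B(5) by simp
  qed
  have fid: "f v = v" if "v \<in> ?K" for v
  proof -
    have orth: "orthogonal (v - f v) b" if "b \<in> B" for b
    proof -
      have "b \<bullet> f v = (\<Sum>b'\<in>B. (b' \<bullet> v) * (b \<bullet> b'))" unfolding f_def
        by (simp add: inner_sum_right)
      also have "\<dots> = (\<Sum>b'\<in>B. if b' = b then b \<bullet> v else 0)"
      proof (rule sum.cong[OF refl])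
        fix b' assume "b' \<in> B"
        show "(b' \<bullet> v) * (b \<bullet> b') = (if b' = b then b \<bullet> v else 0)"
        proof (cases "b' = b")
          case True then show ?thesis using B(3)[OF that] by (simp add: norm_eq_1 inner_commute)
        next
          case False then show ?thesis using B(2) \<open>b' \<in> B\<close> that
            by (auto simp: pairwise_def orthogonal_def inner_commute)
        qed
      qed
      also have "\<dots> = b \<bullet> v" using fB that by simp
      finally show ?thesis by (simp add: orthogonal_def inner_diff_left inner_diff_right inner_commute)
    qed
    have "v - f v \<in> span B" using that fK B(5) by (simp add: matrix_vector_mult_diff_distrib)
    then have "orthogonal (v - f v) (v - f v)"
      using orthogonal_to_span orth by blast
    then show ?thesis by (simp add: orthogonal_def)
  qed
  have symQ: "transpose Q = Q"
    unfolding Q_def f_def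
    by (simp add: vec_eq_iff transpose_def matrix_def inner_axis mult.commute)
  have AQ: "A ** Q = 0"
    by (simp add: matrix_eq matrix_vector_mul_assoc[symmetric] Qv) (use fK in simp)
  show ?thesis using that symQ AQ fid Qv by simp
qed


lemma mp_exists_sym:
  fixes A :: "real^'m::finite^'m"
  assumes sym: "transpose A = A"
  shows "\<exists>X. A ** X ** A = A \<and> X ** A ** X = X \<and> transpose (A ** X) = A ** X \<and> transpose (X ** A) = X ** A"
proof -
  obtain Q :: "real^'m^'m" where Q: "transpose Q = Q" "A ** Q = 0" "\<And>v. A *v v = 0 \<Longrightarrow> Q *v v = v"
    using kernel_proj_exists[OF sym] by metis
  have QA: "Q ** A = 0"
  proof -
    have "Q ** A = transpose (A ** Q)" using Q(1) sym by (simp add: matrix_transpose_mul)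
    then show ?thesis using Q(2) by (simp add: transpose_def vec_eq_iff)
  qed
  have QQ: "Q ** Q = Q"
  proof -
    have "Q *v (Q *v v) = Q *v v" for v
      by (rule Q(3)) (simp add: matrix_vector_mul_assoc Q(2))
    then show ?thesis by (simp add: matrix_eq matrix_vector_mul_assoc[symmetric])
  qed
  have inj: "(A + Q) *v v = 0 \<Longrightarrow> v = 0" for v
  proof -
    assume h: "(A + Q) *v v = 0"
    then have e: "A *v v = - (Q *v v)" by (simp add: matvec_add_rdistrib eq_neg_iff_add_eq_0)
    have "(A *v v) \<bullet> (Q *v v) = v \<bullet> (A *v (Q *v v))" using sym_inner[OF sym] by simp
    also have "\<dots> = 0" by (simp add: matrix_vector_mul_assoc Q(2))
    finally have "(Q *v v) \<bullet> (Q *v v) = 0" using e by simp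
    then have "Q *v v = 0" by simp
    then have "A *v v = 0" using e by simp
    then show "v = 0" using Q(3) \<open>Q *v v = 0\<close> by metis
  qed
  then obtain Y where Y: "Y ** (A + Q) = mat 1" using matrix_left_invertible_ker by blast
  then have Y2: "(A + Q) ** Y = mat 1" using matrix_left_right_inverse by blast
  have QY: "Q ** Y = Q"
  proof -
    have "Q = Q ** ((A + Q) ** Y)" using Y2 by simp
    also have "\<dots> = Q ** Y" by (simp add: matrix_mul_assoc matrix_add_ldistrib QA QQ)
    finally show ?thesis by simp
  qed
  have YQ: "Y ** Q = Q"
  proof -
    have "Q = (Y ** (A + Q)) ** Q" using Y by simp
    also have "\<dots> = Y ** Q" by (simp add: matrix_mul_assoc[symmetric] mat_add_rdistrib Q(2) QQ)
    finally show ?thesis by simp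
  qed
  have AY: "A ** Y = mat 1 - Q"
  proof -
    have "A ** Y + Q ** Y = mat 1" using Y2 by (simp add: mat_add_rdistrib)
    then show ?thesis using QY by (metis add_diff_cancel_right')
  qed
  have YA: "Y ** A = mat 1 - Q"
  proof -
    have "Y ** A + Y ** Q = mat 1" using Y by (simp add: matrix_add_ldistrib)
    then show ?thesis using YQ by (metis add_diff_cancel_right')
  qed
  define X where "X = Y - Q"
  have AX: "A ** X = mat 1 - Q" unfolding X_def by (simp add: mat_sub_ldistrib AY Q(2))
  have XA: "X ** A = mat 1 - Q" unfolding X_def by (simp add: mat_sub_rdistrib YA QA)
  have 1: "A ** X ** A = A" using AX by (simp add: mat_sub_rdistrib QA)
  have QX: "Q ** X = 0" unfolding X_def by (simp add: mat_sub_ldistrib QY QQ)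
  have 2: "X ** A ** X = X" using XA QX by (simp add: mat_sub_rdistrib)
  have Qs: "Q$a$b = Q$b$a" for a b using arg_cong[OF Q(1), of "\<lambda>M. M$a$b"] by (simp add: transpose_def)
  have 3: "transpose (A ** X) = A ** X" unfolding AX using Qs by (simp add: transpose_def vec_eq_iff mat_def)
  have 4: "transpose (X ** A) = X ** A" unfolding XA using Qs by (simp add: transpose_def vec_eq_iff mat_def)
  show ?thesis using 1 2 3 4 by blast
qed

lemma pinv_sym:
  fixes A :: "real^'m::finite^'m"
  assumes sym: "transpose A = A"
  shows "A ** pinv A ** A = A"
proof -
  have "\<exists>!X. A ** X ** A = A \<and> X ** A ** X = X \<and> transpose (A ** X) = A ** X \<and> transpose (X ** A) = X ** A"
    using mp_exists_sym[OF sym] mp_unique by blast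
  from theI'[OF this] show ?thesis unfolding pinv_def by blast
qed



lemma if_zero_mult: "(if P then a else (0::real)) * b = (if P then a * b else 0)" by simp

lemma orth_norm: "orthogonal_matrix (Q::real^'n::finite^'n) \<Longrightarrow> norm (Q *v x) = norm x"
  using orthogonal_transformation_matrix[of "(*v) Q"] orthogonal_transformation_norm by auto

lemma sum_pair_UNIV: "(\<Sum>r\<in>(UNIV::('a::finite\<times>'b::finite) set). f r) = (\<Sum>x\<in>UNIV. \<Sum>y\<in>UNIV. f (x,y))"
  by (simp add: sum.cartesian_product UNIV_Times_UNIV)

lemma wg_nonneg: "weighted_graph w \<Longrightarrow> w x y \<ge> 0" by (simp add: weighted_graph_def)
lemma wg_sym: "weighted_graph w \<Longrightarrow> w x y = w y x" by (simp add: weighted_graph_def)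
lemma wg_diag: "weighted_graph w \<Longrightarrow> w x x = 0" by (simp add: weighted_graph_def)
lemma wg_notpos: "weighted_graph w \<Longrightarrow> \<not> w x y > 0 \<Longrightarrow> w x y = 0"
  using wg_nonneg[of w x y] by simp
lemma deg_nonneg: "weighted_graph w \<Longrightarrow> deg w x \<ge> 0"
  unfolding deg_def by (simp add: sum_nonneg wg_nonneg)

lemma sig_orth: "\<sigma> \<in> signatures w \<Longrightarrow> w x y > 0 \<Longrightarrow> orthogonal_matrix (\<sigma> x y)"
  by (simp add: signatures_def)
lemma sig_tr: "\<sigma> \<in> signatures w \<Longrightarrow> w x y > 0 \<Longrightarrow> \<sigma> y x = transpose (\<sigma> x y)"
  by (simp add: signatures_def)
lemma sig_zero: "\<sigma> \<in> signatures w \<Longrightarrow> \<not> w x y > 0 \<Longrightarrow> \<sigma> x y = 0"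
  by (simp add: signatures_def)

lemma sig_entry_sym:
  assumes "weighted_graph w" "\<sigma> \<in> signatures w"
  shows "w y x * \<sigma> y x $ b $ a = w x y * \<sigma> x y $ a $ b"
proof (cases "w x y > 0")
  case True then show ?thesis using assms sig_tr[OF assms(2) True] wg_sym[OF assms(1)] by (simp add: transpose_def)
next
  case False then show ?thesis using wg_notpos[OF assms(1) False] wg_sym[OF assms(1), of x y] by simp
qed

lemma lap_entry:
  assumes "weighted_graph w" "\<sigma> \<in> signatures w"
  shows "conn_laplacian w \<sigma> $ (x,a) $ (y,b) = (if x = y \<and> a = b then deg w x else 0) - w x y * \<sigma> x y $ a $ b"
  using assms wg_diag[OF assms(1), of x] wg_notpos[OF assms(1), of x y]
  by (auto simp: conn_laplacian_def)

lemma lap_sym: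
  assumes "weighted_graph w" "\<sigma> \<in> signatures w"
  shows "transpose (conn_laplacian w \<sigma>) = conn_laplacian w \<sigma>"
  unfolding vec_eq_iff transpose_def
  using sig_entry_sym[OF assms] by (auto simp: lap_entry[OF assms])

definition blk :: "real^('n::finite\<times>'d::finite) \<Rightarrow> 'n \<Rightarrow> real^'d" where
  "blk v x = (\<chi> a. v $ (x,a))"

lemma lap_mulv:
  assumes "weighted_graph w" "\<sigma> \<in> signatures w"
  shows "(conn_laplacian w \<sigma> *v v) $ (x,a) = deg w x * v $ (x,a) - (\<Sum>y\<in>UNIV. w x y * (\<sigma> x y *v blk v y) $ a)"
proof -
  have 1: "(conn_laplacian w \<sigma> *v v) $ (x,a) = (\<Sum>y\<in>UNIV. \<Sum>b\<in>UNIV.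
      ((if x = y \<and> a = b then deg w x else 0) - w x y * \<sigma> x y $ a $ b) * v $ (y,b))"
    by (simp add: matrix_vector_mult_def sum_pair_UNIV lap_entry[OF assms])
  have 2: "\<dots> = (\<Sum>y\<in>UNIV. \<Sum>b\<in>UNIV. (if x = y \<and> a = b then deg w x * v $ (y,b) else 0))
      - (\<Sum>y\<in>UNIV. \<Sum>b\<in>UNIV. w x y * (\<sigma> x y $ a $ b * v $ (y,b)))"
    by (simp add: sum_subtractf[symmetric] left_diff_distrib mult.assoc if_zero_mult)
  have 3: "(\<Sum>y\<in>UNIV. \<Sum>b\<in>UNIV. (if x = y \<and> a = b then deg w x * v $ (y,b) else 0)) = deg w x * v $ (x,a)"
  proof -
    have "(\<Sum>y\<in>UNIV. \<Sum>b\<in>UNIV. (if x = y \<and> a = b then deg w x * v $ (y,b) else 0)) =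
       (\<Sum>y\<in>UNIV. if x = y then (\<Sum>b\<in>UNIV. if a = b then deg w x * v $ (y,b) else 0) else 0)"
      by (intro sum.cong refl) auto
    then show ?thesis by simp
  qed
  have 4: "(\<Sum>y\<in>UNIV. \<Sum>b\<in>UNIV. w x y * (\<sigma> x y $ a $ b * v $ (y,b))) = (\<Sum>y\<in>UNIV. w x y * (\<sigma> x y *v blk v y) $ a)"
    by (simp add: matrix_vector_mult_def blk_def sum_distrib_left)
  show ?thesis using 1 2 3 4 by simp
qed

lemma blk_lap:
  assumes "weighted_graph w" "\<sigma> \<in> signatures w"
  shows "blk (conn_laplacian w \<sigma> *v v) x = deg w x *\<^sub>R blk v x - (\<Sum>y\<in>UNIV. w x y *\<^sub>R (\<sigma> x y *v blk v y))"
  by (simp add: vec_eq_iff lap_mulv[OF assms] blk_def)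

lemma inner_blk: "v \<bullet> u = (\<Sum>x\<in>UNIV. blk v x \<bullet> blk u x)"
  by (simp add: inner_vec_def sum_pair_UNIV blk_def)

lemma quad_form:
  assumes "weighted_graph w" "\<sigma> \<in> signatures w"
  shows "2 * (v \<bullet> (conn_laplacian w \<sigma> *v v)) =
     (\<Sum>x\<in>UNIV. \<Sum>y\<in>UNIV. w x y * (norm (blk v x - \<sigma> x y *v blk v y))\<^sup>2)"
proof -
  let ?u = "blk v"
  have e: "w x y * (norm (?u x - \<sigma> x y *v ?u y))\<^sup>2 =
      w x y * (norm (?u x))\<^sup>2 + w x y * (norm (?u y))\<^sup>2 - 2 * (w x y * (?u x \<bullet> (\<sigma> x y *v ?u y)))" for x y
  proof (cases "w x y > 0")
    case True
    then have "norm (\<sigma> x y *v ?u y) = norm (?u y)" using orth_norm sig_orth[OF assms(2)] by blast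
    then have "(\<sigma> x y *v ?u y) \<bullet> (\<sigma> x y *v ?u y) = ?u y \<bullet> ?u y" by (metis power2_norm_eq_inner)
    then show ?thesis by (simp add: power2_norm_eq_inner inner_diff_left inner_diff_right inner_commute algebra_simps)
  next
    case False then show ?thesis using wg_notpos[OF assms(1) False] by simp
  qed
  have s1: "(\<Sum>x\<in>UNIV. \<Sum>y\<in>UNIV. w x y * (norm (?u x))\<^sup>2) = (\<Sum>x\<in>UNIV. deg w x * (norm (?u x))\<^sup>2)"
    by (simp add: deg_def sum_distrib_right)
  have s2: "(\<Sum>x\<in>UNIV. \<Sum>y\<in>UNIV. w x y * (norm (?u y))\<^sup>2) = (\<Sum>x\<in>UNIV. deg w x * (norm (?u x))\<^sup>2)"
    by (subst sum.swap) (simp add: deg_def sum_distrib_right wg_sym[OF assms(1)])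
  have "v \<bullet> (conn_laplacian w \<sigma> *v v) = (\<Sum>x\<in>UNIV. ?u x \<bullet> (deg w x *\<^sub>R ?u x - (\<Sum>y\<in>UNIV. w x y *\<^sub>R (\<sigma> x y *v ?u y))))"
    by (simp add: inner_blk blk_lap[OF assms])
  also have "\<dots> = (\<Sum>x\<in>UNIV. deg w x * (norm (?u x))\<^sup>2) - (\<Sum>x\<in>UNIV. \<Sum>y\<in>UNIV. w x y * (?u x \<bullet> (\<sigma> x y *v ?u y)))"
    by (simp add: inner_diff_right inner_sum_right power2_norm_eq_inner sum_subtractf)
  finally show ?thesis
    by (simp add: e sum_subtractf sum.distrib s1 s2 sum_distrib_left)
qed



definition Lg :: "('n::finite \<Rightarrow> 'n \<Rightarrow> real) \<Rightarrow> ('n \<Rightarrow> 'n \<Rightarrow> real^'d::finite^'d) \<Rightarrow> 'n \<Rightarrow> real^('n \<times> 'd)^('n \<times> 'd)" where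
  "Lg w \<sigma> j = (\<chi> r c. if fst r = j \<or> fst c = j then (if r = c then 1 else 0) else conn_laplacian w \<sigma> $ r $ c)"

lemma Lg_sym:
  assumes "weighted_graph w" "\<sigma> \<in> signatures w"
  shows "transpose (Lg w \<sigma> j) = Lg w \<sigma> j"
proof -
  have "conn_laplacian w \<sigma> $ c $ r = conn_laplacian w \<sigma> $ r $ c" for r c
    using arg_cong[OF lap_sym[OF assms], of "\<lambda>M. M $ r $ c"] by (simp add: transpose_def)
  then show ?thesis by (auto simp: Lg_def transpose_def vec_eq_iff)
qed

lemma Lg_mulv_j: "(Lg w \<sigma> j *v v) $ (j,a) = v $ (j,a)"
proof -
  have "(Lg w \<sigma> j *v v) $ (j,a) = (\<Sum>c\<in>UNIV. (if c = (j,a) then v $ c else 0))"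
    by (simp add: matrix_vector_mult_def Lg_def if_zero_mult)
  then show ?thesis by simp
qed

lemma Lg_mulv_other:
  assumes "x \<noteq> j" "\<And>b. v $ (j,b) = 0"
  shows "(Lg w \<sigma> j *v v) $ (x,a) = (conn_laplacian w \<sigma> *v v) $ (x,a)"
  unfolding matrix_vector_mult_def Lg_def vec_lambda_beta
  using assms by (intro sum.cong) auto

lemma Lg_inj:
  assumes wg: "weighted_graph w" and sg: "\<sigma> \<in> signatures w" and con: "graph_connected w"
    and h: "Lg w \<sigma> j *v v = 0"
  shows "v = 0"
proof -
  let ?L = "conn_laplacian w \<sigma>"
  let ?u = "blk v"
  have vj: "v $ (j,b) = 0" for b using Lg_mulv_j[of w \<sigma> j v b] h by simp
  have Lv: "(?L *v v) $ (x,a) = 0" if "x \<noteq> j" for x a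
    using Lg_mulv_other[OF that vj, of w \<sigma> a] h by simp
  have "v \<bullet> (?L *v v) = (\<Sum>x\<in>UNIV. \<Sum>a\<in>UNIV. v $ (x,a) * (?L *v v) $ (x,a))"
    by (simp add: inner_vec_def sum_pair_UNIV)
  also have "\<dots> = 0"
    by (intro sum.neutral ballI) (metis Lv vj mult_eq_0_iff)
  finally have "(\<Sum>x\<in>UNIV. \<Sum>y\<in>UNIV. w x y * (norm (?u x - \<sigma> x y *v ?u y))\<^sup>2) = 0"
    using quad_form[OF wg sg, of v] by simp
  moreover have nn: "0 \<le> w x y * (norm (?u x - \<sigma> x y *v ?u y))\<^sup>2" for x y
    using wg_nonneg[OF wg] by simp
  ultimately have z: "w x y * (norm (?u x - \<sigma> x y *v ?u y))\<^sup>2 = 0" for x y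
    by (simp add: sum_nonneg_eq_0_iff sum_nonneg)
  have edge: "norm (?u x) = norm (?u y)" if "w x y > 0" for x y
  proof -
    have "?u x = \<sigma> x y *v ?u y" using z[of x y] that by simp
    then show ?thesis using orth_norm[OF sig_orth[OF sg that]] by simp
  qed
  have path: "norm (?u x) = norm (?u y)" if "(x,y) \<in> {(a, b). w a b > 0}\<^sup>*" for x y
    using that
  proof (induction rule: rtrancl_induct)
    case base then show ?case by simp
  next
    case (step y z) then show ?case using edge by auto
  qed
  have "?u j = 0" using vj by (simp add: blk_def vec_eq_iff)
  then have "?u x = 0" for x using path[of x j] con by (simp add: graph_connected_def)
  then show ?thesis by (simp add: vec_eq_iff blk_def)
qed

lemma Lg_det:
  assumes "weighted_graph w" "\<sigma> \<in> signatures w" "graph_connected w"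
  shows "det (Lg w \<sigma> j) \<noteq> 0"
proof -
  have "\<exists>B. B ** Lg w \<sigma> j = mat 1" using Lg_inj[OF assms] matrix_left_invertible_ker by blast
  then show ?thesis using invertible_left_inverse invertible_det_nz by blast
qed



lemma walk_prob_nonneg: "weighted_graph w \<Longrightarrow> walk_prob w p \<ge> 0"
  by (induction w p rule: walk_prob.induct) (auto simp: wg_nonneg deg_nonneg)

lemma fhw_jj: "first_hit_walks j j = {[j]}"
proof -
  have "p = [j]" if "p \<in> first_hit_walks j j" for p
  proof (cases p)
    case Nil then show ?thesis using that by (simp add: first_hit_walks_def)
  next
    case (Cons a q)
    then show ?thesis using that by (cases q) (auto simp: first_hit_walks_def)
  qed
  then show ?thesis by (auto simp: first_hit_walks_def)
qed

lemma fhw_hd: "p \<in> first_hit_walks y j \<Longrightarrow> \<exists>q. p = y # q"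
  by (cases p) (auto simp: first_hit_walks_def)

lemma fhw_cons_mem: "x \<noteq> j \<Longrightarrow> p \<in> first_hit_walks y j \<Longrightarrow> x # p \<in> first_hit_walks x j"
  by (cases p) (auto simp: first_hit_walks_def)

lemma fhw_tl:
  assumes "x \<noteq> j" "p \<in> first_hit_walks x j"
  shows "\<exists>q. p = x # q \<and> q \<in> first_hit_walks (hd q) j"
proof -
  obtain q where p: "p = x # q" using fhw_hd[OF assms(2)] by blast
  have "q \<noteq> []" using assms p by (auto simp: first_hit_walks_def)
  then show ?thesis using assms p by (auto simp: first_hit_walks_def)
qed

lemma fhw_split:
  assumes "x \<noteq> j"
  shows "first_hit_walks x j = (\<Union>y\<in>UNIV. (Cons x) ` first_hit_walks y j)"
proof
  show "first_hit_walks x j \<subseteq> (\<Union>y\<in>UNIV. (Cons x) ` first_hit_walks y j)"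
    using fhw_tl[OF assms] by blast
  show "(\<Union>y\<in>UNIV. (Cons x) ` first_hit_walks y j) \<subseteq> first_hit_walks x j"
    using fhw_cons_mem[OF assms] by blast
qed

lemma prob_le1:
  assumes wg: "weighted_graph w"
  shows "finite P \<Longrightarrow> P \<subseteq> first_hit_walks x j \<Longrightarrow> (\<forall>p\<in>P. length p \<le> k) \<Longrightarrow> sum (walk_prob w) P \<le> 1"
proof (induction k arbitrary: x P)
  case 0
  then have "P = {}" by (auto simp: first_hit_walks_def)
  then show ?case by simp
next
  case (Suc k)
  show ?case
  proof (cases "x = j")
    case True
    then have "P \<subseteq> {[j]}" using Suc.prems(2) fhw_jj[of j] by simp
    then have "P = {} \<or> P = {[j]}" by auto
    then show ?thesis by auto
  next
    case False
    let ?g = "\<lambda>p. hd (tl p)"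
    let ?P = "\<lambda>y. {p. p \<in> P \<and> ?g p = y}"
    have "sum (walk_prob w) P = (\<Sum>y\<in>UNIV. sum (walk_prob w) (?P y))"
      using sum.group[of P UNIV ?g "walk_prob w"] Suc.prems(1) by simp
    also have "\<dots> \<le> (\<Sum>y\<in>UNIV. w x y / deg w x)"
    proof (rule sum_mono)
      fix y
      have tlP: "tl ` ?P y \<subseteq> first_hit_walks y j"
      proof
        fix q assume "q \<in> tl ` ?P y"
        then obtain p where p: "p \<in> P" "?g p = y" "q = tl p" by auto
        have "p \<in> first_hit_walks x j" using p(1) Suc.prems(2) by blast
        then obtain q' where "p = x # q'" "q' \<in> first_hit_walks (hd q') j"
          using fhw_tl[OF False] by blast
        then show "q \<in> first_hit_walks y j" using p by simp
      qed
      have eq: "walk_prob w p = w x y / deg w x * walk_prob w (tl p)" if pP: "p \<in> ?P y" for p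
      proof -
        have "p \<in> first_hit_walks x j" using pP Suc.prems(2) by blast
        then obtain q' where q': "p = x # q'" "q' \<in> first_hit_walks (hd q') j"
          using fhw_tl[OF False] by blast
        then obtain r where "q' = y # r" using pP fhw_hd by force
        then show ?thesis using q' by simp
      qed
      have inj: "inj_on tl (?P y)"
      proof (rule inj_onI)
        fix p p' assume "p \<in> ?P y" "p' \<in> ?P y" "tl p = tl p'"
        then show "p = p'" using fhw_hd Suc.prems(2) by (metis (no_types, lifting) list.sel(3) mem_Collect_eq subsetD)
      qed
      have "sum (walk_prob w) (?P y) = (\<Sum>p\<in>?P y. w x y / deg w x * walk_prob w (tl p))"
        using eq by simp
      also have "\<dots> = w x y / deg w x * sum (walk_prob w) (tl ` ?P y)"
        by (simp add: sum_distrib_left sum.reindex[OF inj])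
      also have "\<dots> \<le> w x y / deg w x * 1"
      proof (rule mult_left_mono)
        show "sum (walk_prob w) (tl ` ?P y) \<le> 1"
        proof (rule Suc.IH)
          show "finite (tl ` ?P y)" using Suc.prems(1) by simp
          show "tl ` ?P y \<subseteq> first_hit_walks y j" by (rule tlP)
          show "\<forall>p\<in>tl ` ?P y. length p \<le> k" using Suc.prems(3) by auto
        qed
        show "0 \<le> w x y / deg w x" using wg by (simp add: wg_nonneg deg_nonneg)
      qed
      finally show "sum (walk_prob w) (?P y) \<le> w x y / deg w x" by simp
    qed
    also have "\<dots> \<le> 1"
    proof -
      have "(\<Sum>y\<in>UNIV. w x y / deg w x) = deg w x / deg w x" unfolding deg_def by (rule sum_divide_distrib[symmetric])
      then show ?thesis by simp
    qed
    finally show ?thesis .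
  qed
qed

lemma prob_summable:
  assumes wg: "weighted_graph w"
  shows "walk_prob w summable_on first_hit_walks x j"
proof (rule nonneg_bdd_above_summable_on)
  show "\<And>p. p \<in> first_hit_walks x j \<Longrightarrow> 0 \<le> walk_prob w p" using walk_prob_nonneg[OF wg] by simp
  show "bdd_above (sum (walk_prob w) ` {F. F \<subseteq> first_hit_walks x j \<and> finite F})"
  proof (rule bdd_aboveI)
    fix s assume "s \<in> sum (walk_prob w) ` {F. F \<subseteq> first_hit_walks x j \<and> finite F}"
    then obtain F where F: "F \<subseteq> first_hit_walks x j" "finite F" "s = sum (walk_prob w) F" by auto
    have "\<forall>p\<in>F. length p \<le> Max (length ` F)" using F(2) by simp
    then show "s \<le> 1" using prob_le1[OF wg F(2) F(1)] F(3) by blast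
  qed
qed

lemma hol_orth:
  assumes wg: "weighted_graph w" and sg: "\<sigma> \<in> signatures w"
  shows "walk_prob w p \<noteq> 0 \<Longrightarrow> orthogonal_matrix (walk_holonomy \<sigma> p)"
proof (induction p rule: induct_list012)
  case (3 x y zs)
  then have "w x y \<noteq> 0" "walk_prob w (y # zs) \<noteq> 0" by auto
  then have "w x y > 0" using wg_nonneg[OF wg, of x y] by simp
  then have "orthogonal_matrix (\<sigma> x y)" using sig_orth[OF sg] by blast
  then show ?case using 3(2) \<open>walk_prob w (y # zs) \<noteq> 0\<close> by (simp add: orthogonal_matrix_mul)
qed (simp_all add: orthogonal_matrix_id)

lemma orth_norm_bound:
  fixes A :: "real^'d::finite^'d"
  assumes "orthogonal_matrix A"
  shows "norm A \<le> real CARD('d)"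
proof -
  have r: "norm (A $ i) = 1" for i
    using assms orthogonal_matrix_orthonormal_rows[of A] by (simp add: row_def vec_nth_inverse)
  have "norm A \<le> (\<Sum>i\<in>UNIV. norm (A $ i))"
    unfolding norm_vec_def by (rule L2_set_le_sum) simp
  then show ?thesis using r by simp
qed

lemma term_summable:
  fixes \<sigma> :: "'n::finite \<Rightarrow> 'n \<Rightarrow> real^'d::finite^'d"
  assumes wg: "weighted_graph w" and sg: "\<sigma> \<in> signatures w"
  shows "(\<lambda>p. walk_prob w p *\<^sub>R walk_holonomy \<sigma> p) summable_on first_hit_walks x j"
proof (rule abs_summable_summable)
  have b: "norm (walk_prob w p *\<^sub>R walk_holonomy \<sigma> p) \<le> real CARD('d) * walk_prob w p" for p
  proof (cases "walk_prob w p = 0")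
    case True then show ?thesis by simp
  next
    case False
    have "norm (walk_holonomy \<sigma> p) \<le> real CARD('d)"
      by (rule orth_norm_bound[OF hol_orth[OF wg sg False]])
    then show ?thesis using walk_prob_nonneg[OF wg, of p]
      by (simp add: mult.commute mult_left_mono)
  qed
  show "(\<lambda>p. norm (walk_prob w p *\<^sub>R walk_holonomy \<sigma> p)) summable_on first_hit_walks x j"
    by (rule summable_on_comparison_test[OF summable_on_cmult_right[OF prob_summable[OF wg]] b]) simp
qed



lemma omega_jj: "Omega0 w \<sigma> j j = mat 1"
  unfolding Omega0_def fhw_jj by simp

lemma bl_left_mult: "bounded_linear (\<lambda>M::real^'d::finite^'d. c *\<^sub>R (A ** M))"
proof -
  have "linear (\<lambda>M::real^'d^'d. c *\<^sub>R (A ** M))"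
    by (rule linearI) (simp_all add: matrix_add_ldistrib matrix_scalar_ac scalar_matrix_assoc[symmetric] scaleR_add_right)
  then show ?thesis by (simp add: linear_conv_bounded_linear)
qed

lemma omega_harm:
  fixes \<sigma> :: "'n::finite \<Rightarrow> 'n \<Rightarrow> real^'d::finite^'d"
  assumes wg: "weighted_graph w" and sg: "\<sigma> \<in> signatures w" and xj: "x \<noteq> j"
  shows "Omega0 w \<sigma> x j = (\<Sum>y\<in>UNIV. (w x y / deg w x) *\<^sub>R (\<sigma> x y ** Omega0 w \<sigma> y j))"
proof -
  define f where "f p = walk_prob w p *\<^sub>R walk_holonomy \<sigma> p" for p
  define S where "S y = (w x y / deg w x) *\<^sub>R (\<sigma> x y ** Omega0 w \<sigma> y j)" for y
  have part: "(f has_sum S y) (Cons x ` first_hit_walks y j)" for y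
  proof -
    have hs: "(f has_sum Omega0 w \<sigma> y j) (first_hit_walks y j)"
      unfolding Omega0_def f_def using term_summable[OF wg sg] by (rule has_sum_infsum)
    have "((\<lambda>p. (w x y / deg w x) *\<^sub>R (\<sigma> x y ** f p)) has_sum S y) (first_hit_walks y j)"
      unfolding S_def by (rule has_sum_bounded_linear[OF bl_left_mult hs])
    moreover have "(f \<circ> Cons x) p = (w x y / deg w x) *\<^sub>R (\<sigma> x y ** f p)" if pm: "p \<in> first_hit_walks y j" for p
    proof -
      obtain q where "p = y # q" using fhw_hd[OF pm] by blast
      then show ?thesis by (simp add: f_def matrix_scalar_ac scalar_matrix_assoc)
    qed
    ultimately have "((f \<circ> Cons x) has_sum S y) (first_hit_walks y j)"
      using has_sum_cong by (metis (no_types, lifting))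
    then show ?thesis by (subst has_sum_reindex) auto
  qed
  have disj: "Cons x ` first_hit_walks y j \<inter> Cons x ` first_hit_walks y' j = {}" if "y \<noteq> y'" for y y'
    using that by (auto simp: first_hit_walks_def)
  have "(f has_sum (\<Sum>y\<in>UNIV. S y)) (\<Union>y\<in>UNIV. Cons x ` first_hit_walks y j)"
    by (rule sum_has_sum) (use part disj in auto)
  then have "(f has_sum (\<Sum>y\<in>UNIV. S y)) (first_hit_walks x j)"
    using fhw_split[OF xj] by simp
  then show ?thesis unfolding Omega0_def f_def[symmetric] S_def by (rule infsumI)
qed



definition blkM :: "real^'d^('n::finite\<times>'d::finite) \<Rightarrow> 'n \<Rightarrow> real^'d^'d" where
  "blkM M y = (\<chi> l b. M $ (y,l) $ b)"

definition Zm :: "('n::finite \<Rightarrow> 'n \<Rightarrow> real) \<Rightarrow> ('n \<Rightarrow> 'n \<Rightarrow> real^'d::finite^'d) \<Rightarrow> 'n \<Rightarrow> real^'d^('n \<times> 'd)" where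
  "Zm w \<sigma> j = (\<chi> r b. if fst r = j then 0 else Omega0 w \<sigma> (fst r) j $ snd r $ b)"

definition Bm :: "('n::finite \<Rightarrow> 'n \<Rightarrow> real) \<Rightarrow> ('n \<Rightarrow> 'n \<Rightarrow> real^'d::finite^'d) \<Rightarrow> 'n \<Rightarrow> real^'d^('n \<times> 'd)" where
  "Bm w \<sigma> j = (\<chi> r b. if fst r = j then 0 else w (fst r) j * \<sigma> (fst r) j $ snd r $ b)"

definition Ei :: "'n::finite \<Rightarrow> real^'d::finite^('n \<times> 'd)" where
  "Ei i = (\<chi> r b. if fst r = i \<and> snd r = b then 1 else 0)"

lemma lap_mul_col:
  assumes "weighted_graph w" "\<sigma> \<in> signatures w"
  shows "(conn_laplacian w \<sigma> ** M) $ (x,a) $ b = deg w x * M $ (x,a) $ b - (\<Sum>y\<in>UNIV. w x y * (\<sigma> x y ** blkM M y) $ a $ b)"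
proof -
  have "(conn_laplacian w \<sigma> ** M) $ (x,a) $ b = (conn_laplacian w \<sigma> *v (\<chi> r. M $ r $ b)) $ (x,a)"
    by (simp add: matrix_matrix_mult_def matrix_vector_mult_def)
  also have "\<dots> = deg w x * M $ (x,a) $ b - (\<Sum>y\<in>UNIV. w x y * (\<sigma> x y ** blkM M y) $ a $ b)"
    by (subst lap_mulv[OF assms]) (simp add: blk_def blkM_def matrix_matrix_mult_def matrix_vector_mult_def)
  finally show ?thesis .
qed

lemma Lg_mul_j: "(Lg w \<sigma> j ** M) $ (j,a) $ b = M $ (j,a) $ b"
proof -
  have "(Lg w \<sigma> j ** M) $ (j,a) $ b = (\<Sum>c\<in>UNIV. (if c = (j,a) then M $ c $ b else 0))"
    by (simp add: matrix_matrix_mult_def Lg_def if_zero_mult)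
  then show ?thesis by simp
qed

lemma Lg_mul_other:
  assumes "x \<noteq> j" "\<And>l b. M $ (j,l) $ b = 0"
  shows "(Lg w \<sigma> j ** M) $ (x,a) $ b = (conn_laplacian w \<sigma> ** M) $ (x,a) $ b"
  unfolding matrix_matrix_mult_def Lg_def vec_lambda_beta
  using assms by (intro sum.cong) auto

lemma omega_harm_deg:
  fixes \<sigma> :: "'n::finite \<Rightarrow> 'n \<Rightarrow> real^'d::finite^'d"
  assumes wg: "weighted_graph w" and sg: "\<sigma> \<in> signatures w" and xj: "x \<noteq> j"
  shows "deg w x *\<^sub>R Omega0 w \<sigma> x j = (\<Sum>y\<in>UNIV. w x y *\<^sub>R (\<sigma> x y ** Omega0 w \<sigma> y j))"
proof (cases "deg w x = 0")
  case True
  then have "w x y = 0" for y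
    using wg_nonneg[OF wg] sum_nonneg_eq_0_iff[of UNIV "w x"] unfolding deg_def by simp
  then show ?thesis using True by simp
next
  case False
  show ?thesis
    using False by (simp add: omega_harm[OF wg sg xj] scaleR_sum_right)
qed

lemma LgZ:
  fixes \<sigma> :: "'n::finite \<Rightarrow> 'n \<Rightarrow> real^'d::finite^'d"
  assumes wg: "weighted_graph w" and sg: "\<sigma> \<in> signatures w"
  shows "Lg w \<sigma> j ** Zm w \<sigma> j = Bm w \<sigma> j"
proof -
  have Zj: "Zm w \<sigma> j $ (j,l) $ b = 0" for l b by (simp add: Zm_def)
  have bZ: "blkM (Zm w \<sigma> j) y = (if y = j then 0 else Omega0 w \<sigma> y j)" for y
    by (simp add: blkM_def Zm_def vec_eq_iff)
  have "(Lg w \<sigma> j ** Zm w \<sigma> j) $ (x,a) $ b = Bm w \<sigma> j $ (x,a) $ b" for x a b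
  proof (cases "x = j")
    case True then show ?thesis by (simp add: Lg_mul_j Zj Bm_def)
  next
    case False
    have h: "deg w x *\<^sub>R Omega0 w \<sigma> x j = (\<Sum>y\<in>UNIV. w x y *\<^sub>R (\<sigma> x y ** Omega0 w \<sigma> y j))"
      by (rule omega_harm_deg[OF wg sg False])
    have "(\<Sum>y\<in>UNIV. w x y *\<^sub>R (\<sigma> x y ** Omega0 w \<sigma> y j)) =
        (\<Sum>y\<in>UNIV. w x y *\<^sub>R (\<sigma> x y ** blkM (Zm w \<sigma> j) y)) + w x j *\<^sub>R \<sigma> x j"
    proof -
      have "(\<Sum>y\<in>UNIV. w x y *\<^sub>R (\<sigma> x y ** Omega0 w \<sigma> y j)) =
          (\<Sum>y\<in>UNIV. w x y *\<^sub>R (\<sigma> x y ** blkM (Zm w \<sigma> j) y) + (if y = j then w x j *\<^sub>R \<sigma> x j else 0))"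
        by (intro sum.cong refl) (simp add: bZ omega_jj)
      then show ?thesis by (simp add: sum.distrib)
    qed
    then have "deg w x * Omega0 w \<sigma> x j $ a $ b - (\<Sum>y\<in>UNIV. w x y * (\<sigma> x y ** blkM (Zm w \<sigma> j) y) $ a $ b)
        = w x j * \<sigma> x j $ a $ b"
      using arg_cong[OF h, of "\<lambda>M. M $ a $ b"] by (simp add: sum_component)
    moreover have "(Lg w \<sigma> j ** Zm w \<sigma> j) $ (x,a) $ b = (conn_laplacian w \<sigma> ** Zm w \<sigma> j) $ (x,a) $ b"
      by (rule Lg_mul_other[OF False Zj])
    moreover have "(conn_laplacian w \<sigma> ** Zm w \<sigma> j) $ (x,a) $ b = deg w x * Zm w \<sigma> j $ (x,a) $ b - (\<Sum>y\<in>UNIV. w x y * (\<sigma> x y ** blkM (Zm w \<sigma> j) y) $ a $ b)"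
      by (rule lap_mul_col[OF wg sg])
    moreover have "Zm w \<sigma> j $ (x,a) $ b = Omega0 w \<sigma> x j $ a $ b" using False by (simp add: Zm_def)
    moreover have "Bm w \<sigma> j $ (x,a) $ b = w x j * \<sigma> x j $ a $ b" using False by (simp add: Bm_def)
    ultimately show ?thesis by simp
  qed
  then show ?thesis by (simp add: vec_eq_iff)
qed



lemma pair_cond: "(fst k = i \<and> snd k = b) \<longleftrightarrow> k = (i,b)" by auto

lemma X_exists:
  assumes "weighted_graph w" "\<sigma> \<in> signatures w" "graph_connected w"
  shows "\<exists>X. Lg w \<sigma> j ** X = Ei i"
proof -
  obtain B where "B ** Lg w \<sigma> j = mat 1" using Lg_inj[OF assms] matrix_left_invertible_ker by blast
  then have "Lg w \<sigma> j ** B = mat 1" using matrix_left_right_inverse by blast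
  then have "Lg w \<sigma> j ** (B ** Ei i) = Ei i" by (simp add: matrix_mul_assoc)
  then show ?thesis by blast
qed

lemma Xj:
  assumes "i \<noteq> j" "Lg w \<sigma> j ** X = Ei i"
  shows "X $ (j,a) $ b = 0"
  using Lg_mul_j[of w \<sigma> j X a b] assms by (simp add: Ei_def)

lemma LapX:
  fixes \<sigma> :: "'n::finite \<Rightarrow> 'n \<Rightarrow> real^'d::finite^'d"
  assumes wg: "weighted_graph w" and sg: "\<sigma> \<in> signatures w" and ij: "i \<noteq> j"
    and X: "Lg w \<sigma> j ** X = Ei i"
  shows "conn_laplacian w \<sigma> ** X = Nmat w \<sigma> i j"
proof -
  have X0: "X $ (j,l) $ b = 0" for l b using Xj[OF ij X] .
  have "(conn_laplacian w \<sigma> ** X) $ (x,a) $ b = Nmat w \<sigma> i j $ (x,a) $ b" for x a b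
  proof (cases "x = j")
    case False
    have "(conn_laplacian w \<sigma> ** X) $ (x,a) $ b = (Lg w \<sigma> j ** X) $ (x,a) $ b"
      by (rule Lg_mul_other[OF False X0, symmetric])
    then show ?thesis using False X by (simp add: Ei_def Nmat_def mat_def)
  next
    case True
    have "(conn_laplacian w \<sigma> ** X) $ (j,a) $ b = - (\<Sum>y\<in>UNIV. w j y * (\<Sum>l\<in>UNIV. \<sigma> j y $ a $ l * X $ (y,l) $ b))"
      by (subst lap_mul_col[OF wg sg]) (simp add: X0 blkM_def matrix_matrix_mult_def)
    also have "\<dots> = - (\<Sum>y\<in>UNIV. \<Sum>l\<in>UNIV. X $ (y,l) $ b * (if y = j then 0 else w y j * \<sigma> y j $ l $ a))"
    proof -
      have "w j y * (\<Sum>l\<in>UNIV. \<sigma> j y $ a $ l * X $ (y,l) $ b) =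
            (\<Sum>l\<in>UNIV. X $ (y,l) $ b * (if y = j then 0 else w y j * \<sigma> y j $ l $ a))" for y
      proof (cases "y = j")
        case True then show ?thesis using wg_diag[OF wg] by simp
      next
        case False
        have "w y j * \<sigma> y j $ l $ a = w j y * \<sigma> j y $ a $ l" for l
          by (rule sig_entry_sym[OF wg sg])
        then show ?thesis using False by (simp add: sum_distrib_left mult_ac)
      qed
      then show ?thesis by simp
    qed
    also have "\<dots> = - (transpose X ** Bm w \<sigma> j) $ b $ a"
      by (simp add: matrix_matrix_mult_def transpose_def Bm_def sum_pair_UNIV del: fst_conv snd_conv) (simp only: fst_conv snd_conv)
    also have "transpose X ** Bm w \<sigma> j = transpose (Ei i) ** Zm w \<sigma> j"
    proof -
      have "transpose (Ei i) ** Zm w \<sigma> j = transpose (Lg w \<sigma> j ** X) ** Zm w \<sigma> j" using X by simp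
      also have "\<dots> = transpose X ** (Lg w \<sigma> j ** Zm w \<sigma> j)"
        by (simp add: matrix_transpose_mul Lg_sym[OF wg sg] matrix_mul_assoc)
      finally show ?thesis by (simp add: LgZ[OF wg sg])
    qed
    also have "(transpose (Ei i) ** Zm w \<sigma> j) $ b $ a = Omega0 w \<sigma> i j $ b $ a"
    proof -
      have "(transpose (Ei i) ** Zm w \<sigma> j) $ b $ a = (\<Sum>r\<in>UNIV. if r = (i,b) then Zm w \<sigma> j $ r $ a else 0)"
        by (simp add: matrix_matrix_mult_def transpose_def Ei_def if_zero_mult pair_cond)
      then show ?thesis using ij by (simp add: Zm_def)
    qed
    finally show ?thesis using True ij by (simp add: Nmat_def transpose_def)
  qed
  then show ?thesis by (simp add: vec_eq_iff)
qed



lemma trace_id: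
  fixes \<sigma> :: "'n::finite \<Rightarrow> 'n \<Rightarrow> real^'d::finite^'d"
  assumes wg: "weighted_graph w" and sg: "\<sigma> \<in> signatures w" and ij: "i \<noteq> j"
    and X: "Lg w \<sigma> j ** X = Ei i"
  shows "trace (transpose (Wmat w \<sigma> i j) ** conn_laplacian w \<sigma> ** Wmat w \<sigma> i j) = (\<Sum>b\<in>UNIV. X $ (i,b) $ b)"
proof -
  let ?L = "conn_laplacian w \<sigma>"
  let ?P = "pinv ?L"
  let ?N = "Nmat w \<sigma> i j"
  have Ls: "transpose ?L = ?L" by (rule lap_sym[OF wg sg])
  have LPL: "?L ** ?P ** ?L = ?L" by (rule pinv_sym[OF Ls])
  have LtPL: "?L ** transpose ?P ** ?L = ?L"
  proof -
    have "?L ** transpose ?P ** ?L = transpose (?L ** ?P ** ?L)"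
      by (simp add: matrix_transpose_mul Ls matrix_mul_assoc)
    also have "\<dots> = ?L" by (simp only: LPL Ls)
    finally show ?thesis .
  qed
  have R1: "?L ** (transpose ?P ** (?L ** Y)) = ?L ** Y" for Y :: "real^'d^('n\<times>'d)"
    using LtPL by (simp add: matrix_mul_assoc)
  have R2: "?L ** (?P ** (?L ** Y)) = ?L ** Y" for Y :: "real^'d^('n\<times>'d)"
    using LPL by (simp add: matrix_mul_assoc)
  have LX: "?L ** X = ?N" by (rule LapX[OF wg sg ij X])
  have W: "Wmat w \<sigma> i j = ?P ** (?L ** X)" unfolding Wmat_def LX ..
  have "transpose (Wmat w \<sigma> i j) ** ?L ** Wmat w \<sigma> i j =
        transpose X ** (?L ** (transpose ?P ** (?L ** (?P ** (?L ** X)))))"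
    unfolding W by (simp add: matrix_transpose_mul Ls matrix_mul_assoc)
  also have "\<dots> = transpose X ** ?N" by (subst R2, subst R1, simp add: LX)
  finally have e: "transpose (Wmat w \<sigma> i j) ** ?L ** Wmat w \<sigma> i j = transpose X ** ?N" .
  have X0: "X $ (j,l) $ b = 0" for l b using Xj[OF ij X] .
  have "trace (transpose X ** ?N) = (\<Sum>b\<in>UNIV. \<Sum>x\<in>UNIV. \<Sum>a\<in>UNIV. X $ (x,a) $ b * ?N $ (x,a) $ b)"
    by (simp add: trace_def matrix_matrix_mult_def transpose_def sum_pair_UNIV)
  also have "\<dots> = (\<Sum>b\<in>UNIV. \<Sum>x\<in>UNIV. \<Sum>a\<in>UNIV. if x = i \<and> a = b then X $ (i,b) $ b else 0)"
    by (intro sum.cong refl) (auto simp: Nmat_def mat_def X0 ij)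
  also have "\<dots> = (\<Sum>b\<in>UNIV. X $ (i,b) $ b)"
  proof (rule sum.cong[OF refl])
    fix b
    have "(\<Sum>x\<in>UNIV. \<Sum>a\<in>UNIV. if x = i \<and> a = b then X $ (i,b) $ b else 0) =
          (\<Sum>x\<in>UNIV. if x = i then (\<Sum>a\<in>UNIV. if a = b then X $ (i,b) $ b else 0) else 0)"
      by (intro sum.cong refl) auto
    then show "(\<Sum>x\<in>UNIV. \<Sum>a\<in>UNIV. if x = i \<and> a = b then X $ (i,b) $ b else 0) = X $ (i,b) $ b" by simp
  qed
  finally show ?thesis using e by simp
qed

lemma X_cramer:
  assumes "det (Lg w \<sigma> j) \<noteq> 0" "Lg w \<sigma> j ** X = Ei i"
  shows "X $ (i,b) $ b = det (\<chi> r c. if c = (i,b) then Ei i $ r $ b else Lg w \<sigma> j $ r $ c) / det (Lg w \<sigma> j)"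
proof -
  define x where "x = (\<chi> r. X $ r $ b)"
  have Lx: "Lg w \<sigma> j *v x = (\<chi> r. Ei i $ r $ b)"
    using arg_cong[OF assms(2), of "\<lambda>M. \<chi> r. M $ r $ b"]
    by (simp add: x_def matrix_matrix_mult_def matrix_vector_mult_def)
  then have "det (\<chi> r c. if c = (i,b) then Ei i $ r $ b else Lg w \<sigma> j $ r $ c) = x $ (i,b) * det (Lg w \<sigma> j)"
    using cramer_lemma[where A = "Lg w \<sigma> j" and k = "(i,b)" and x = x] unfolding Lx vec_lambda_beta by simp
  then show ?thesis using assms(1) by (simp add: x_def field_simps)
qed



definition Lgc :: "('n::finite \<Rightarrow> 'n \<Rightarrow> real) \<Rightarrow> ('n \<Rightarrow> 'n \<Rightarrow> real^'d::finite^'d) \<Rightarrow> 'n \<Rightarrow> real^('n \<times> 'd)^('n \<times> 'd)" where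
  "Lgc w \<sigma> j = (\<chi> r c. if fst r = j \<or> fst c = j then (if r = c then 1 else 0)
      else (if r = c then deg w (fst r) else 0) - w (fst r) (fst c) * \<sigma> (fst r) (fst c) $ snd r $ snd c)"

lemma Lg_eq:
  assumes "weighted_graph w" "\<sigma> \<in> signatures w"
  shows "Lg w \<sigma> j = Lgc w \<sigma> j"
proof -
  have "conn_laplacian w \<sigma> $ r $ c = (if r = c then deg w (fst r) else 0) - w (fst r) (fst c) * \<sigma> (fst r) (fst c) $ snd r $ snd c" for r c
    using lap_entry[OF assms, of "fst r" "snd r" "fst c" "snd c"] by (simp add: prod_eq_iff)
  then show ?thesis by (simp add: Lg_def Lgc_def vec_eq_iff)
qed

lemma cont_if_const [continuous_intros]:
  "continuous_on S f \<Longrightarrow> continuous_on S g \<Longrightarrow> continuous_on S (\<lambda>x. if P then f x else g x)"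
  by (cases P) auto

lemma cont_sig: "continuous_on S (\<lambda>\<sigma>::'n \<Rightarrow> 'n \<Rightarrow> real^'d::finite^'d. \<sigma> x y $ a $ b)"
proof -
  have "continuous_on S (\<lambda>\<sigma>::'n \<Rightarrow> 'n \<Rightarrow> real^'d^'d. \<sigma> x)"
    by (rule continuous_on_product_then_coordinatewise[OF continuous_on_id])
  then have "continuous_on S (\<lambda>\<sigma>::'n \<Rightarrow> 'n \<Rightarrow> real^'d^'d. \<sigma> x y)"
    by (rule continuous_on_product_then_coordinatewise)
  then show ?thesis by (intro continuous_on_component)
qed

lemma cont_det:
  fixes M :: "'a::topological_space \<Rightarrow> real^'m::finite^'m"
  assumes "\<And>r c. continuous_on S (\<lambda>s. M s $ r $ c)"
  shows "continuous_on S (\<lambda>s. det (M s))"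
  unfolding det_def by (intro continuous_intros assms)

lemma cont_Lgc: "continuous_on S (\<lambda>\<sigma>. Lgc w \<sigma> j $ r $ c)"
  unfolding Lgc_def vec_lambda_beta by (intro continuous_intros cont_sig)

lemma cont_D: "continuous_on S (\<lambda>\<sigma>. det (\<chi> r c. if c = k then (E :: real^'d::finite^('n::finite \<times> 'd)) $ r $ b else Lgc w (\<sigma>::'n \<Rightarrow> 'n \<Rightarrow> real^'d^'d) j $ r $ c))"
  by (rule cont_det) (simp, intro continuous_intros cont_Lgc)

lemma resistance_formula:
  fixes \<sigma> :: "'n::finite \<Rightarrow> 'n \<Rightarrow> real^'d::finite^'d"
  assumes wg: "weighted_graph w" and con: "graph_connected w" and ij: "i \<noteq> j" and sg: "\<sigma> \<in> signatures w"
  shows "conn_eff_resistance w \<sigma> i j = 1 / (2 * real CARD('d)) *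
     ((\<Sum>b\<in>UNIV. det (\<chi> r c. if c = (i,b) then Ei i $ r $ b else Lgc w \<sigma> j $ r $ c) / det (Lgc w \<sigma> j)) +
      (\<Sum>b\<in>UNIV. det (\<chi> r c. if c = (j,b) then Ei j $ r $ b else Lgc w \<sigma> i $ r $ c) / det (Lgc w \<sigma> i)))"
proof -
  obtain X where X: "Lg w \<sigma> j ** X = Ei i" using X_exists[OF wg sg con] by blast
  obtain X' where X': "Lg w \<sigma> i ** X' = Ei j" using X_exists[OF wg sg con] by blast
  have ji: "j \<noteq> i" using ij by simp
  have t1: "trace (transpose (Wmat w \<sigma> i j) ** conn_laplacian w \<sigma> ** Wmat w \<sigma> i j) =
      (\<Sum>b\<in>UNIV. det (\<chi> r c. if c = (i,b) then Ei i $ r $ b else Lgc w \<sigma> j $ r $ c) / det (Lgc w \<sigma> j))"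
    unfolding trace_id[OF wg sg ij X] X_cramer[OF Lg_det[OF wg sg con] X] Lg_eq[OF wg sg] ..
  have t2: "trace (transpose (Wmat w \<sigma> j i) ** conn_laplacian w \<sigma> ** Wmat w \<sigma> j i) =
      (\<Sum>b\<in>UNIV. det (\<chi> r c. if c = (j,b) then Ei j $ r $ b else Lgc w \<sigma> i $ r $ c) / det (Lgc w \<sigma> i))"
    unfolding trace_id[OF wg sg ji X'] X_cramer[OF Lg_det[OF wg sg con] X'] Lg_eq[OF wg sg] ..
  show ?thesis unfolding conn_eff_resistance_def t1 t2 ..
qed

theorem theorem6p11:
  fixes w :: "'n::finite \<Rightarrow> 'n \<Rightarrow> real" and i j :: 'n
  assumes "weighted_graph w" and "graph_connected w" and "i \<noteq> j"
  shows "continuous_on (signatures w :: ('n \<Rightarrow> 'n \<Rightarrow> real^'d::finite^'d) set)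
           (\<lambda>\<sigma>. conn_eff_resistance w \<sigma> i j)"
proof -
  have nz: "det (Lgc w \<sigma> k) \<noteq> 0" if "\<sigma> \<in> signatures w" for \<sigma> :: "'n \<Rightarrow> 'n \<Rightarrow> real^'d^'d" and k
    using Lg_det[OF assms(1) that assms(2)] Lg_eq[OF assms(1) that] by simp
  have "continuous_on (signatures w :: ('n \<Rightarrow> 'n \<Rightarrow> real^'d::finite^'d) set) (\<lambda>\<sigma>. 1 / (2 * real CARD('d)) *
     ((\<Sum>b\<in>UNIV. det (\<chi> r c. if c = (i,b) then Ei i $ r $ b else Lgc w \<sigma> j $ r $ c) / det (Lgc w \<sigma> j)) +
      (\<Sum>b\<in>UNIV. det (\<chi> r c. if c = (j,b) then Ei j $ r $ b else Lgc w \<sigma> i $ r $ c) / det (Lgc w \<sigma> i))))"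
    by (intro continuous_intros cont_D cont_det cont_Lgc) (auto simp: nz)
  then show ?thesis
    by (rule continuous_on_cong[THEN iffD1, rotated 2]) (auto simp: resistance_formula[OF assms(1,2,3)])
qed


end
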